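(* Let $(X,\le)$ be a non-empty strictly inductive poset, $f:X\to X$ and $a_0\in X$ with $a_0\le f(a_0)$. Let $W$ be the set of elements of $X$ that are the least upper bound of some $a_0$-chain. If $f$ is monotone on $W$ (i.e. $f(x)\le f(y)$ for all $x,y\in W$ with $x\le y$), then $\mathrm{lub}(W)$ exists and is a fixpoint of $f$.
   Context: A poset is strictly inductive if every non-empty chain (totally ordered subset) has a least upper bound $\mathrm{lub}$ in $X$. A subset $C\subseteq X$ is an $a_0$-chain (with respect to $f$) if: $C$ is well ordered by $\le$; $a_0$ is the least element of $C$; for every non-empty $P\subseteq C$, $\mathrm{lub}(P)$ exists and belongs to $C$; and for every $z\in C\setminus\{\mathrm{lub}(C)\}$ we have $f(z)\in C$, $z<f(z)$, and there is no $y\in C$ with $z<y<f(z)$. *)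

theory Defs
  imports Main
begin

definition is_lub_in :: "'a::order set \<Rightarrow> 'a set \<Rightarrow> 'a \<Rightarrow> bool" where
  "is_lub_in X P x \<longleftrightarrow> x \<in> X \<and> (\<forall>p\<in>P. p \<le> x) \<and> (\<forall>y\<in>X. (\<forall>p\<in>P. p \<le> y) \<longrightarrow> x \<le> y)"

definition lub_in :: "'a::order set \<Rightarrow> 'a set \<Rightarrow> 'a" where
  "lub_in X P = (THE x. is_lub_in X P x)"

definition is_chain :: "'a::order set \<Rightarrow> bool" where
  "is_chain C \<longleftrightarrow> (\<forall>x\<in>C. \<forall>y\<in>C. x \<le> y \<or> y \<le> x)"

definition strictly_inductive :: "'a::order set \<Rightarrow> bool" where
  "strictly_inductive X \<longleftrightarrow>
     (\<forall>C. C \<subseteq> X \<and> C \<noteq> {} \<and> is_chain C \<longrightarrow> (\<exists>x. is_lub_in X C x))"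

definition well_ordered_set :: "'a::order set \<Rightarrow> bool" where
  "well_ordered_set C \<longleftrightarrow> is_chain C \<and>
     (\<forall>P. P \<subseteq> C \<and> P \<noteq> {} \<longrightarrow> (\<exists>m\<in>P. \<forall>p\<in>P. m \<le> p))"

definition a0_chain :: "'a::order set \<Rightarrow> ('a \<Rightarrow> 'a) \<Rightarrow> 'a \<Rightarrow> 'a set \<Rightarrow> bool" where
  "a0_chain X f a0 C \<longleftrightarrow>
     C \<subseteq> X \<and> well_ordered_set C \<and>
     a0 \<in> C \<and> (\<forall>c\<in>C. a0 \<le> c) \<and>
     (\<forall>P. P \<subseteq> C \<and> P \<noteq> {} \<longrightarrow> (\<exists>x. is_lub_in X P x) \<and> lub_in X P \<in> C) \<and>
     (\<forall>z \<in> C - {lub_in X C}. f z \<in> C \<and> z < f z \<and> \<not> (\<exists>y\<in>C. z < y \<and> y < f z))"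

end

theory Submission imports Defs begin

lemma lub_unique: assumes "is_lub_in X P x" shows "lub_in X P = x"
  unfolding lub_in_def
proof (rule the_equality)
  show "is_lub_in X P x" by (rule assms)
  fix y assume "is_lub_in X P y"
  then show "y = x" using assms unfolding is_lub_in_def by (meson order.antisym)
qed

lemma lub_ex: "\<exists>x. is_lub_in X P x \<Longrightarrow> is_lub_in X P (lub_in X P)"
  using lub_unique by metis

lemma chain_top:
  assumes "a0_chain X f a0 C"
  shows "is_lub_in X C (lub_in X C)" "lub_in X C \<in> C" "C \<subseteq> X" "is_chain C"
proof -
  have "C \<subseteq> C \<and> C \<noteq> {}" using assms by (auto simp: a0_chain_def)
  then have "(\<exists>x. is_lub_in X C x) \<and> lub_in X C \<in> C" using assms unfolding a0_chain_def by blast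
  then show "is_lub_in X C (lub_in X C)" "lub_in X C \<in> C" using lub_ex by auto
  show "C \<subseteq> X" "is_chain C" using assms by (auto simp: a0_chain_def well_ordered_set_def)
qed

lemma chain_close:
  assumes "a0_chain X f a0 C" "P \<subseteq> C" "P \<noteq> {}"
  shows "is_lub_in X P (lub_in X P)" "lub_in X P \<in> C"
proof -
  have "\<forall>P. P \<subseteq> C \<and> P \<noteq> {} \<longrightarrow> (\<exists>x. is_lub_in X P x) \<and> lub_in X P \<in> C"
    using assms(1) unfolding a0_chain_def by (elim conjE)
  then have "(\<exists>x. is_lub_in X P x) \<and> lub_in X P \<in> C" using assms(2,3) by blast
  then show "is_lub_in X P (lub_in X P)" "lub_in X P \<in> C" using lub_ex by auto
qed

lemma chain_succ:
  assumes "a0_chain X f a0 C" "z \<in> C" "z \<noteq> lub_in X C"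
  shows "f z \<in> C" "z < f z" "\<And>y. y \<in> C \<Longrightarrow> z < y \<Longrightarrow> y < f z \<Longrightarrow> False"
proof -
  have "\<forall>z \<in> C - {lub_in X C}. f z \<in> C \<and> z < f z \<and> \<not> (\<exists>y\<in>C. z < y \<and> y < f z)"
    using assms(1) unfolding a0_chain_def by (elim conjE)
  then have "f z \<in> C \<and> z < f z \<and> \<not> (\<exists>y\<in>C. z < y \<and> y < f z)" using assms(2,3) by blast
  then show "f z \<in> C" "z < f z" "\<And>y. y \<in> C \<Longrightarrow> z < y \<Longrightarrow> y < f z \<Longrightarrow> False" by auto
qed

lemma chain_a0: "a0_chain X f a0 C \<Longrightarrow> c \<in> C \<Longrightarrow> a0 \<le> c"
  "a0_chain X f a0 C \<Longrightarrow> a0 \<in> C"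
  unfolding a0_chain_def by (elim conjE; blast)+

lemma chain_min: "a0_chain X f a0 C \<Longrightarrow> P \<subseteq> C \<Longrightarrow> P \<noteq> {} \<Longrightarrow> \<exists>m\<in>P. \<forall>p\<in>P. m \<le> p"
  unfolding a0_chain_def well_ordered_set_def by (elim conjE; blast)

lemma chain_cmp: "a0_chain X f a0 C \<Longrightarrow> x \<in> C \<Longrightarrow> y \<in> C \<Longrightarrow> x \<le> y \<or> y \<le> x"
  unfolding a0_chain_def well_ordered_set_def is_chain_def by (elim conjE; blast)

lemma segment:
  assumes C: "a0_chain X f a0 C" and c: "c \<in> C"
  shows "a0_chain X f a0 {x\<in>C. x \<le> c}" "lub_in X {x\<in>C. x \<le> c} = c"
proof -
  let ?S = "{x\<in>C. x \<le> c}"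
  note top = chain_top[OF C]
  have cX: "c \<in> X" using top c by auto
  have lubS: "is_lub_in X ?S c" using cX c by (auto simp: is_lub_in_def)
  then show lS: "lub_in X ?S = c" by (rule lub_unique)
  have ws: "well_ordered_set ?S"
    unfolding well_ordered_set_def is_chain_def
  proof (intro conjI allI impI ballI)
    fix x y assume "x \<in> ?S" "y \<in> ?S" then show "x \<le> y \<or> y \<le> x" using chain_cmp[OF C] by blast
  next
    fix P assume "P \<subseteq> ?S \<and> P \<noteq> {}" then show "\<exists>m\<in>P. \<forall>p\<in>P. m \<le> p"
      using chain_min[OF C, of P] by blast
  qed
  have clos: "(\<exists>x. is_lub_in X P x) \<and> lub_in X P \<in> ?S" if "P \<subseteq> ?S" "P \<noteq> {}" for P
  proof -
    have "P \<subseteq> C" using that by auto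
    note cl = chain_close[OF C this that(2)]
    have "lub_in X P \<le> c" using cl(1) cX that(1) unfolding is_lub_in_def by blast
    then show ?thesis using cl by blast
  qed
  have succ: "f z \<in> ?S \<and> z < f z \<and> \<not> (\<exists>y\<in>?S. z < y \<and> y < f z)" if z: "z \<in> ?S - {lub_in X ?S}" for z
  proof -
    have zc: "z < c" using z lS by auto
    have "c \<le> lub_in X C" using top(1) c by (auto simp: is_lub_in_def)
    then have "z \<noteq> lub_in X C" using zc by auto
    note s = chain_succ[OF C _ this]
    have zC: "z \<in> C" using z by auto
    have "f z \<le> c"
    proof (rule ccontr)
      assume "\<not> f z \<le> c"
      then have "c < f z" using chain_cmp[OF C c s(1)[OF zC]] by auto
      then show False using s(3)[OF zC c zc] by blast
    qed
    then show ?thesis using s[OF zC] by blast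
  qed
  show "a0_chain X f a0 ?S"
    unfolding a0_chain_def
    using ws clos succ top(3) chain_a0[OF C] c by auto
qed

lemma compare:
  assumes C: "a0_chain X f a0 C" and D: "a0_chain X f a0 D"
  shows "(C \<subseteq> D \<and> (\<forall>x\<in>C. \<forall>y\<in>D. y \<le> x \<longrightarrow> y \<in> C)) \<or> (D \<subseteq> C \<and> (\<forall>x\<in>D. \<forall>y\<in>C. y \<le> x \<longrightarrow> y \<in> D))"
proof (rule ccontr)
  assume neg: "\<not> ?thesis"
  define I where "I = {x \<in> C \<inter> D. \<forall>y. y \<le> x \<longrightarrow> (y \<in> C \<longleftrightarrow> y \<in> D)}"
  have IC: "I \<noteq> C"
  proof
    assume "I = C"
    then have "C \<subseteq> D \<and> (\<forall>x\<in>C. \<forall>y\<in>D. y \<le> x \<longrightarrow> y \<in> C)" unfolding I_def by blast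
    then show False using neg by blast
  qed
  have ID: "I \<noteq> D"
  proof
    assume "I = D"
    then have "D \<subseteq> C \<and> (\<forall>x\<in>D. \<forall>y\<in>C. y \<le> x \<longrightarrow> y \<in> D)" unfolding I_def by blast
    then show False using neg by blast
  qed
  have "a0 \<in> I"
  proof -
    have "y = a0" if "y \<le> a0" "y \<in> C \<or> y \<in> D" for y
      using that chain_a0[OF C] chain_a0[OF D] by (meson order.antisym)
    then show ?thesis unfolding I_def using chain_a0(2)[OF C] chain_a0(2)[OF D] by blast
  qed
  then have Ine: "I \<noteq> {}" by auto
  have "I \<subseteq> C" "I \<subseteq> D" unfolding I_def by auto
  define s where "s = lub_in X I"
  have lubI: "is_lub_in X I s" and sC: "s \<in> C" and sD: "s \<in> D"
    using chain_close[OF C \<open>I \<subseteq> C\<close> Ine] chain_close[OF D \<open>I \<subseteq> D\<close> Ine] s_def by auto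
  have CX: "C \<subseteq> X" "D \<subseteq> X" using chain_top[OF C] chain_top[OF D] by auto
  have belowC: "y \<in> D" if "y \<le> s" "y \<in> C" for y
  proof (cases "y = s")
    case True then show ?thesis using sD by simp
  next
    case False
    then have ys: "y < s" using that by auto
    have "\<exists>i\<in>I. \<not> i \<le> y"
    proof (rule ccontr)
      assume "\<not> ?thesis"
      then have "s \<le> y" using lubI CX that(2) unfolding is_lub_in_def by blast
      then show False using ys by auto
    qed
    then obtain i where i: "i \<in> I" "\<not> i \<le> y" by blast
    have "y \<le> i" using chain_cmp[OF C that(2), of i] i \<open>I \<subseteq> C\<close> by blast
    then show ?thesis using i(1) that(2) unfolding I_def by blast
  qed
  have belowD: "y \<in> C" if "y \<le> s" "y \<in> D" for y
  proof (cases "y = s")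
    case True then show ?thesis using sC by simp
  next
    case False
    then have ys: "y < s" using that by auto
    have "\<exists>i\<in>I. \<not> i \<le> y"
    proof (rule ccontr)
      assume "\<not> ?thesis"
      then have "s \<le> y" using lubI CX that(2) unfolding is_lub_in_def by blast
      then show False using ys by auto
    qed
    then obtain i where i: "i \<in> I" "\<not> i \<le> y" by blast
    have "y \<le> i" using chain_cmp[OF D that(2), of i] i \<open>I \<subseteq> D\<close> by blast
    then show ?thesis using i(1) that(2) unfolding I_def by blast
  qed
  have inI: "x \<in> I" if "x \<le> s" "x \<in> C \<or> x \<in> D" for x
  proof -
    have "x \<in> C" "x \<in> D" using that belowC belowD by blast+
    moreover have "y \<in> C \<longleftrightarrow> y \<in> D" if "y \<le> x" for y
      using belowC belowD order.trans[OF that \<open>x \<le> s\<close>] by blast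
    ultimately show ?thesis unfolding I_def by blast
  qed
  have sCtop: "s \<noteq> lub_in X C"
  proof
    assume "s = lub_in X C"
    then have "\<forall>x\<in>C. x \<le> s" using chain_top(1)[OF C] unfolding is_lub_in_def by blast
    then have "C \<subseteq> I" using inI by blast
    then show False using IC \<open>I \<subseteq> C\<close> by blast
  qed
  have sDtop: "s \<noteq> lub_in X D"
  proof
    assume "s = lub_in X D"
    then have "\<forall>x\<in>D. x \<le> s" using chain_top(1)[OF D] unfolding is_lub_in_def by blast
    then have "D \<subseteq> I" using inI by blast
    then show False using ID \<open>I \<subseteq> D\<close> by blast
  qed
  note sc = chain_succ[OF C sC sCtop] and sd = chain_succ[OF D sD sDtop]
  have "f s \<in> I"
    unfolding I_def
  proof (intro CollectI conjI IntI allI impI sc(1) sd(1))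
    fix y assume y: "y \<le> f s"
    show "y \<in> C \<longleftrightarrow> y \<in> D"
    proof
      assume yC: "y \<in> C"
      show "y \<in> D"
      proof (cases "y \<le> s")
        case True then show ?thesis using belowC yC by blast
      next
        case False
        then have "s < y" using chain_cmp[OF C sC yC] by auto
        then have "y = f s" using sc(3)[OF yC] y by fastforce
        then show ?thesis using sd(1) by simp
      qed
    next
      assume yD: "y \<in> D"
      show "y \<in> C"
      proof (cases "y \<le> s")
        case True then show ?thesis using belowD yD by blast
      next
        case False
        then have "s < y" using chain_cmp[OF D sD yD] by auto
        then have "y = f s" using sd(3)[OF yD] y by fastforce
        then show ?thesis using sc(1) by simp
      qed
    qed
  qed
  then have "f s \<le> s" using lubI unfolding is_lub_in_def by blast
  then show False using sc(2) by auto
qed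


lemma extension:
  assumes C: "a0_chain X f a0 C" and t: "t = lub_in X C" and ftX: "f t \<in> X" and lt: "t < f t"
  shows "a0_chain X f a0 (insert (f t) C)"
proof -
  let ?E = "insert (f t) C"
  note top = chain_top[OF C]
  have le_t: "c \<le> t" if "c \<in> C" for c using top(1) that t unfolding is_lub_in_def by blast
  have lt_ft: "c < f t" if "c \<in> C" for c using le_t[OF that] lt by (rule order.strict_trans1)
  have lubft: "is_lub_in X P (f t)" if "f t \<in> P" "P \<subseteq> ?E" for P
    using that ftX lt_ft unfolding is_lub_in_def by (auto intro: order.strict_implies_order)
  have lE: "lub_in X ?E = f t" using lubft[of ?E] lub_unique by blast
  have ws: "well_ordered_set ?E"
    unfolding well_ordered_set_def is_chain_def
  proof (intro conjI allI impI ballI)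
    fix x y assume "x \<in> ?E" "y \<in> ?E" then show "x \<le> y \<or> y \<le> x"
      using chain_cmp[OF C] lt_ft by (auto intro: order.strict_implies_order)
  next
    fix P assume P: "P \<subseteq> ?E \<and> P \<noteq> {}"
    show "\<exists>m\<in>P. \<forall>p\<in>P. m \<le> p"
    proof (cases "P \<inter> C = {}")
      case True
      then have "P = {f t}" using P by auto
      then show ?thesis by auto
    next
      case False
      then obtain m where m: "m \<in> P \<inter> C" "\<forall>p\<in>P \<inter> C. m \<le> p" using chain_min[OF C, of "P \<inter> C"] by blast
      have "\<forall>p\<in>P. m \<le> p" using m P lt_ft by (auto intro: order.strict_implies_order)
      then show ?thesis using m by blast
    qed
  qed
  have clos: "(\<exists>x. is_lub_in X P x) \<and> lub_in X P \<in> ?E" if "P \<subseteq> ?E" "P \<noteq> {}" for P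
  proof (cases "f t \<in> P")
    case True
    then show ?thesis using lubft[OF True that(1)] lub_unique by blast
  next
    case False
    then have "P \<subseteq> C" using that by auto
    then show ?thesis using chain_close[OF C _ that(2)] by blast
  qed
  have succ: "f z \<in> ?E \<and> z < f z \<and> \<not> (\<exists>y\<in>?E. z < y \<and> y < f z)" if z: "z \<in> ?E - {lub_in X ?E}" for z
  proof -
    have zC: "z \<in> C" using z lE by auto
    show ?thesis
    proof (cases "z = t")
      case True
      then show ?thesis using lt le_t by (auto dest: order.strict_trans1)
    next
      case False
      note s = chain_succ[OF C zC, folded t, OF False]
      have "f z \<le> t" using le_t s(1) by blast
      then show ?thesis using s lt
        by (metis insert_iff order.strict_trans1 order_less_asym)
    qed
  qed
  show ?thesis
    unfolding a0_chain_def
    using ws clos succ top(3) chain_a0[OF C] ftX lt_ft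
    by (auto intro: order.strict_implies_order)
qed

lemma singleton_chain:
  assumes "a0 \<in> X"
  shows "a0_chain X f a0 {a0}"
proof -
  have l: "is_lub_in X {a0} a0" using assms unfolding is_lub_in_def by auto
  have "P = {a0}" if "P \<subseteq> {a0}" "P \<noteq> {}" for P :: "'a set" using that by auto
  then show ?thesis unfolding a0_chain_def well_ordered_set_def is_chain_def
    using l lub_unique[OF l] assms by auto
qed


theorem mainTheorem3:
  fixes X :: "'a::order set" and f :: "'a \<Rightarrow> 'a" and a0 :: 'a
  assumes "X \<noteq> {}"
    and "strictly_inductive X"
    and "\<forall>x\<in>X. f x \<in> X"
    and "a0 \<in> X"
    and "a0 \<le> f a0"
    and "W = {x \<in> X. \<exists>C. a0_chain X f a0 C \<and> is_lub_in X C x}"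
    and "\<forall>x\<in>W. \<forall>y\<in>W. x \<le> y \<longrightarrow> f x \<le> f y"
  shows "(\<exists>w. is_lub_in X W w) \<and> f (lub_in X W) = lub_in X W"
proof -
  note si = assms(2) and fX = assms(3) and a0X = assms(4) and a0f = assms(5)
    and Wdef = assms(6) and mono = assms(7)
  let ?ch = "a0_chain X f a0"
  have Wchar: "x \<in> W \<longleftrightarrow> (\<exists>C. ?ch C \<and> x \<in> C)" for x
  proof
    assume "x \<in> W"
    then obtain C where C: "?ch C" "is_lub_in X C x" using Wdef by blast
    then have "lub_in X C = x" using lub_unique by blast
    then show "\<exists>C. ?ch C \<and> x \<in> C" using C chain_top(2)[OF C(1)] by auto
  next
    assume "\<exists>C. ?ch C \<and> x \<in> C"
    then obtain C where C: "?ch C" "x \<in> C" by blast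
    note sg = segment[OF C]
    have "is_lub_in X {y\<in>C. y \<le> x} x" using chain_top(1)[OF sg(1)] sg(2) by simp
    moreover have "x \<in> X" using chain_top(3)[OF C(1)] C(2) by auto
    ultimately show "x \<in> W" using Wdef sg(1) by blast
  qed
  have cmp: "x \<le> y \<or> y \<le> x" if "?ch C" "?ch D" "x \<in> C" "y \<in> D" for C D x y
    using compare[OF that(1,2)] chain_cmp[OF that(1)] chain_cmp[OF that(2)] that(3,4) by blast
  have segm: "y \<in> C" if "?ch C" "?ch D" "x \<in> C" "y \<in> D" "y \<le> x" for C D x y
    using compare[OF that(1,2)] that(3-5) by blast
  have Wsub: "W \<subseteq> X" using Wdef by auto
  have a0W: "a0 \<in> W" using Wchar singleton_chain[OF a0X] by blast
  have Wch: "is_chain W" unfolding is_chain_def using Wchar cmp by metis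
  obtain w where w: "is_lub_in X W w" using si Wsub a0W Wch unfolding strictly_inductive_def by blast
  have wX: "w \<in> X" and ubw: "\<And>c. c \<in> W \<Longrightarrow> c \<le> w" and lew: "\<And>y. y \<in> X \<Longrightarrow> (\<forall>c\<in>W. c \<le> y) \<Longrightarrow> w \<le> y"
    using w unfolding is_lub_in_def by blast+
  let ?D = "insert w W"
  have lubw: "is_lub_in X P w" if "w \<in> P" "P \<subseteq> ?D" for P
    using that wX ubw unfolding is_lub_in_def by blast
  have lD: "lub_in X ?D = w" using lubw[of ?D] lub_unique by blast
  have a0le: "a0 \<le> c" if "c \<in> W" for c using that Wchar chain_a0 by blast
  have wsD: "well_ordered_set ?D"
    unfolding well_ordered_set_def
  proof (intro conjI allI impI)
    show "is_chain ?D" using Wch ubw unfolding is_chain_def by blast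
  next
    fix P assume P: "P \<subseteq> ?D \<and> P \<noteq> {}"
    show "\<exists>m\<in>P. \<forall>p\<in>P. m \<le> p"
    proof (cases "P \<inter> W = {}")
      case True
      then have "P = {w}" using P by auto
      then show ?thesis by auto
    next
      case False
      then obtain p where p: "p \<in> P" "p \<in> W" by blast
      then obtain Cp where Cp: "?ch Cp" "p \<in> Cp" using Wchar by blast
      obtain m where m: "m \<in> P \<inter> Cp" "\<forall>q\<in>P \<inter> Cp. m \<le> q"
        using chain_min[OF Cp(1), of "P \<inter> Cp"] p Cp by blast
      have mW: "m \<in> W" using m Cp Wchar by blast
      have "m \<le> q" if q: "q \<in> P" for q
      proof (cases "q = w")
        case True then show ?thesis using ubw mW by simp
      next
        case False
        then have "q \<in> W" using q P by auto
        then obtain Cq where Cq: "?ch Cq" "q \<in> Cq" using Wchar by blast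
        have "m \<le> q \<or> q \<le> m" using cmp[OF Cp(1) Cq(1)] m Cq by blast
        then show ?thesis
        proof
          assume "q \<le> m"
          then have "q \<in> Cp" using segm[OF Cp(1) Cq(1) _ Cq(2)] m by blast
          then show ?thesis using m q by blast
        qed
      qed
      then show ?thesis using m by blast
    qed
  qed
  have closD: "(\<exists>x. is_lub_in X P x) \<and> lub_in X P \<in> ?D" if P: "P \<subseteq> ?D" "P \<noteq> {}" for P
  proof (cases "w \<in> P")
    case True
    then show ?thesis using lubw[OF True P(1)] lub_unique by blast
  next
    case False
    then have PW: "P \<subseteq> W" using P by auto
    show ?thesis
    proof (cases "\<exists>c\<in>W. \<forall>p\<in>P. p \<le> c")
      case True
      then obtain c where c: "c \<in> W" "\<forall>p\<in>P. p \<le> c" by blast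
      then obtain Cc where Cc: "?ch Cc" "c \<in> Cc" using Wchar by blast
      have "P \<subseteq> Cc"
      proof
        fix p assume "p \<in> P"
        then obtain Cp where "?ch Cp" "p \<in> Cp" using PW Wchar by blast
        then show "p \<in> Cc" using segm[OF Cc(1) _ Cc(2)] c \<open>p \<in> P\<close> by blast
      qed
      note cl = chain_close[OF Cc(1) this P(2)]
      then have "lub_in X P \<in> W" using Wchar Cc by blast
      then show ?thesis using cl by blast
    next
      case False
      have "is_lub_in X P w" unfolding is_lub_in_def
      proof (intro conjI ballI impI)
        show "w \<in> X" by (rule wX)
        show "p \<le> w" if "p \<in> P" for p using that PW ubw by blast
        fix y assume y: "y \<in> X" "\<forall>p\<in>P. p \<le> y"
        have "c \<le> y" if c: "c \<in> W" for c
        proof -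
          obtain p where p: "p \<in> P" "\<not> p \<le> c" using False c by blast
          then have "c \<le> p" using Wch c PW unfolding is_chain_def by blast
          then show ?thesis using y p by (meson order.trans)
        qed
        then show "w \<le> y" using lew y by blast
      qed
      then show ?thesis using lub_unique by blast
    qed
  qed
  have succD: "f z \<in> ?D \<and> z < f z \<and> \<not> (\<exists>y\<in>?D. z < y \<and> y < f z)" if z: "z \<in> ?D - {lub_in X ?D}" for z
  proof -
    have zW: "z \<in> W" and zw: "z \<noteq> w" using z lD by auto
    have "\<exists>c\<in>W. \<not> c \<le> z"
    proof (rule ccontr)
      assume "\<not> ?thesis"
      then have "w \<le> z" using lew zW Wsub by blast
      then show False using ubw[OF zW] zw by auto
    qed
    then obtain c where c: "c \<in> W" "\<not> c \<le> z" by blast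
    then have zc: "z < c" using Wch zW unfolding is_chain_def by (metis order.not_eq_order_implies_strict)
    obtain Cc where Cc: "?ch Cc" "c \<in> Cc" using Wchar c by blast
    obtain Cz where Cz: "?ch Cz" "z \<in> Cz" using Wchar zW by blast
    have zCc: "z \<in> Cc" using segm[OF Cc(1) Cz(1) Cc(2) Cz(2)] zc by auto
    have "c \<le> lub_in X Cc" using chain_top(1)[OF Cc(1)] Cc(2) unfolding is_lub_in_def by blast
    then have "z \<noteq> lub_in X Cc" using zc by auto
    note s = chain_succ[OF Cc(1) zCc this]
    have fzW: "f z \<in> W" using s(1) Cc Wchar by blast
    have "\<not> (\<exists>y\<in>?D. z < y \<and> y < f z)"
    proof
      assume "\<exists>y\<in>?D. z < y \<and> y < f z"
      then obtain y where y: "y \<in> ?D" "z < y" "y < f z" by blast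
      show False
      proof (cases "y = w")
        case True then show ?thesis using ubw[OF fzW] y by auto
      next
        case False
        then have "y \<in> W" using y by auto
        then obtain Cy where Cy: "?ch Cy" "y \<in> Cy" using Wchar by blast
        have "y \<in> Cc" using segm[OF Cc(1) Cy(1) s(1) Cy(2)] y by auto
        then show False using s(3) y by blast
      qed
    qed
    then show ?thesis using fzW s(2) by blast
  qed
  have Dch: "?ch ?D"
    unfolding a0_chain_def
    using wsD closD succD Wsub wX a0W a0le ubw[OF a0W] by auto
  have wW: "w \<in> W" using Wchar Dch by blast
  then have DW: "?D = W" by auto
  have WC: "?ch W" using Dch DW by simp
  have lW: "lub_in X W = w" using lD DW by simp
  have fwX: "f w \<in> X" using fX wX by blast
  have wfw: "w \<le> f w"
  proof (cases "W - {w} = {}")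
    case True
    then have "a0 = w" using a0W by auto
    then show ?thesis using a0f by simp
  next
    case False
    let ?P = "W - {w}"
    note cl = chain_close[OF WC _ False]
    have lP: "is_lub_in X ?P (lub_in X ?P)" "lub_in X ?P \<in> W" using cl by auto
    have succ: "f c \<in> W" "c < f c" if "c \<in> ?P" for c
      using chain_succ[OF WC, of c] that lW by auto
    show ?thesis
    proof (cases "lub_in X ?P = w")
      case True
      have "c \<le> f w" if c: "c \<in> ?P" for c
      proof -
        have "f c \<le> f w" using mono succ(1)[OF c] wW c ubw by blast
        then show ?thesis using succ(2)[OF c] by (meson order.strict_implies_order order.trans)
      qed
      then have "lub_in X ?P \<le> f w" using lP(1) fwX unfolding is_lub_in_def by blast
      then show ?thesis using True by simp
    next
      case False
      let ?l = "lub_in X ?P"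
      have lPm: "?l \<in> ?P" using lP(2) False by auto
      note sl = succ[OF lPm]
      have "f ?l = w"
      proof (rule ccontr)
        assume "f ?l \<noteq> w"
        then have "f ?l \<in> ?P" using sl by auto
        then have "f ?l \<le> ?l" using lP(1) unfolding is_lub_in_def by blast
        then show False using sl(2) by auto
      qed
      moreover have "f ?l \<le> f w" using mono lP(2) wW ubw[OF lP(2)] by blast
      ultimately show ?thesis by simp
    qed
  qed
  have "f w = w"
  proof (rule ccontr)
    assume "f w \<noteq> w"
    then have "w < f w" using wfw by auto
    from extension[OF WC lW[symmetric] fwX this]
    have "f w \<in> W" using Wchar by blast
    then have "f w \<le> w" using ubw by blast
    then show False using \<open>w < f w\<close> by auto
  qed
  then show ?thesis using w lW by auto
qed

end
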